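(* Let $n\ge2$ and $\mathbf{x}\in[0,1]^n$ with $0\le x_1\le\dots\le x_n\le1$ and $\sum_{i=1}^nx_i\le1$. Let $f:2^{[n]}\to\mathbb{R}_+$ be monotone submodular and suppose either (i) $f(\{n\})=\max_{i\in[n]}f(\{i\})$, or (ii) $f(\{i\})$ is the same constant for all $i\in[n]$. Then $f^{+}(\mathbf{x})/f^{++}(\mathbf{x})\le4/3$ (with the convention $0/0=1$).
   Context: $[n]=\{1,\dots,n\}$. A set function $f:2^{[n]}\to\mathbb{R}_+$ is monotone if $f(S)\le f(T)$ for $S\subseteq T$, submodular if $f(S)+f(T)\ge f(S\cap T)+f(S\cup T)$. For $\mathbf{x}\in[0,1]^n$: the concave closure $f^{+}(\mathbf{x})=\max\sum_{S\subseteq[n]}\theta(S)f(S)$ over $\theta:2^{[n]}\to\mathbb{R}_{\ge0}$ with $\sum_S\theta(S)=1$ and $\sum_{S\ni i}\theta(S)=x_i$ for all $i$; the upper pairwise independent extension $f^{++}(\mathbf{x})$ is the same maximum with the additional constraints $\sum_{S\ni i,j}\theta(S)=x_ix_j$ for all $i<j$. *)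

theory Defs
  imports Main "HOL-Library.Extended_Real" Complex_Main
begin

text \<open>Ground set [n] = {1..n}; set functions are f :: nat set => real, only
  their values on subsets of {1..n} matter.\<close>

definition monotone_setfun :: "nat \<Rightarrow> (nat set \<Rightarrow> real) \<Rightarrow> bool" where
  "monotone_setfun n f \<longleftrightarrow>
     (\<forall>S T. S \<subseteq> T \<and> T \<subseteq> {1..n} \<longrightarrow> f S \<le> f T)"

definition submodular_setfun :: "nat \<Rightarrow> (nat set \<Rightarrow> real) \<Rightarrow> bool" where
  "submodular_setfun n f \<longleftrightarrow>
     (\<forall>S T. S \<subseteq> {1..n} \<and> T \<subseteq> {1..n} \<longrightarrow> f S + f T \<ge> f (S \<inter> T) + f (S \<union> T))"

definition cc_feasible :: "nat \<Rightarrow> (nat \<Rightarrow> real) \<Rightarrow> (nat set \<Rightarrow> real) \<Rightarrow> bool" where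
  "cc_feasible n x \<theta> \<longleftrightarrow>
     (\<forall>S\<in>Pow {1..n}. \<theta> S \<ge> 0) \<and>
     sum \<theta> (Pow {1..n}) = 1 \<and>
     (\<forall>i\<in>{1..n}. sum \<theta> {S\<in>Pow {1..n}. i \<in> S} = x i)"

definition pi_feasible :: "nat \<Rightarrow> (nat \<Rightarrow> real) \<Rightarrow> (nat set \<Rightarrow> real) \<Rightarrow> bool" where
  "pi_feasible n x \<theta> \<longleftrightarrow>
     cc_feasible n x \<theta> \<and>
     (\<forall>i\<in>{1..n}. \<forall>j\<in>{1..n}. i < j \<longrightarrow>
        sum \<theta> {S\<in>Pow {1..n}. i \<in> S \<and> j \<in> S} = x i * x j)"

definition concave_closure :: "nat \<Rightarrow> (nat set \<Rightarrow> real) \<Rightarrow> (nat \<Rightarrow> real) \<Rightarrow> real" where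
  "concave_closure n f x =
     Sup {(\<Sum>S\<in>Pow {1..n}. \<theta> S * f S) | \<theta>. cc_feasible n x \<theta>}"

definition upper_pi_ext :: "nat \<Rightarrow> (nat set \<Rightarrow> real) \<Rightarrow> (nat \<Rightarrow> real) \<Rightarrow> real" where
  "upper_pi_ext n f x =
     Sup {(\<Sum>S\<in>Pow {1..n}. \<theta> S * f S) | \<theta>. pi_feasible n x \<theta>}"

end

theory Submission
  imports Defs
begin

definition pd :: "nat set \<Rightarrow> (nat\<Rightarrow>real) \<Rightarrow> nat set \<Rightarrow> real" where
  "pd A y T = (\<Prod>i\<in>T. y i) * (\<Prod>i\<in>A-T. 1 - y i)"

lemma pd_marg:
  fixes y :: "nat \<Rightarrow> real"
  assumes "finite A" "K \<subseteq> A"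
  shows "(\<Sum>T\<in>Pow A. (if K \<subseteq> T then pd A y T else 0)) = (\<Prod>i\<in>K. y i)"
proof -
  let ?b = "\<lambda>i. if i \<in> K then 0 else 1 - y i"
  have "(\<Prod>i\<in>K. y i) = (\<Prod>i\<in>A. y i + ?b i)"
  proof -
    have "(\<Prod>i\<in>A. y i + ?b i) = (\<Prod>i\<in>K. y i + ?b i) * (\<Prod>i\<in>A-K. y i + ?b i)"
      using assms by (metis (no_types, lifting) Diff_partition finite_Diff prod.union_disjoint Diff_disjoint finite_subset)
    also have "\<dots> = (\<Prod>i\<in>K. y i)" by simp
    finally show ?thesis by simp
  qed
  also have "\<dots> = (\<Sum>T\<in>Pow A. (\<Prod>i\<in>T. y i) * (\<Prod>i\<in>A-T. ?b i))"
    by (rule prod_add[OF assms(1)])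
  also have "\<dots> = (\<Sum>T\<in>Pow A. (if K \<subseteq> T then pd A y T else 0))"
  proof (rule sum.cong[OF refl])
    fix T assume T: "T \<in> Pow A"
    show "(\<Prod>i\<in>T. y i) * (\<Prod>i\<in>A-T. ?b i) = (if K \<subseteq> T then pd A y T else 0)"
    proof (cases "K \<subseteq> T")
      case True
      then have "(\<Prod>i\<in>A-T. ?b i) = (\<Prod>i\<in>A-T. 1 - y i)"
        by (intro prod.cong) auto
      then show ?thesis using True by (simp add: pd_def)
    next
      case False
      then obtain k where k: "k \<in> K" "k \<notin> T" by auto
      then have "k \<in> A - T" using assms by auto
      then have "(\<Prod>i\<in>A-T. ?b i) = 0"
        using assms(1) k by (intro prod_zero) auto
      then show ?thesis using False by simp
    qed
  qed
  finally show ?thesis by simp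
qed

lemma pd_nonneg: "(\<forall>i\<in>A. 0 \<le> y i \<and> y i \<le> 1) \<Longrightarrow> T \<subseteq> A \<Longrightarrow> 0 \<le> pd A y T"
  unfolding pd_def by (intro mult_nonneg_nonneg prod_nonneg) auto

lemma sub_bound:
  fixes f :: "nat set \<Rightarrow> real"
  assumes sm: "submodular_setfun n f" and S: "S \<subseteq> {1..n}"
  shows "f S \<le> f {} + (\<Sum>i\<in>S. f {i} - f {})"
proof -
  have "finite S" using S finite_subset by blast
  then show ?thesis using S
  proof (induction S rule: finite_induct)
    case empty then show ?case by simp
  next
    case (insert a S)
    have "f S + f {a} \<ge> f (S \<inter> {a}) + f (S \<union> {a})"
      using sm insert.prems unfolding submodular_setfun_def
      by (metis (no_types, lifting) empty_subsetI insert_subset)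
    moreover have "S \<inter> {a} = {}" using insert.hyps by auto
    moreover have "S \<union> {a} = insert a S" by auto
    ultimately have "f (insert a S) \<le> f S + f {a} - f {}" by simp
    then show ?case using insert by simp
  qed
qed

definition th :: "nat \<Rightarrow> (nat \<Rightarrow> real) \<Rightarrow> nat set \<Rightarrow> real" where
"th n x S = (if n \<in> S then x n * x n * pd {1..n-1} (\<lambda>i. x i / x n) (S - {n}) else 0)
  + (if S = {n} then x n * (1 - x n) else 0)
  + (\<Sum>i\<in>{1..n-1}. if S = {i} then (1 - x n) * x i else 0)
  + (if S = {} then (1 - x n) * (1 - (\<Sum>i\<in>{1..n-1}. x i)) else 0)"

lemma th_sum:
  fixes g :: "nat set \<Rightarrow> real"
  assumes "n \<ge> 1"
  shows "(\<Sum>S\<in>Pow{1..n}. th n x S * g S) =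
     x n * x n * (\<Sum>T\<in>Pow{1..n-1}. pd {1..n-1} (\<lambda>i. x i/x n) T * g (insert n T))
   + x n * (1 - x n) * g {n} + (1 - x n) * (\<Sum>i\<in>{1..n-1}. x i * g {i})
   + (1 - x n) * (1 - (\<Sum>i\<in>{1..n-1}. x i)) * g {}"
proof -
  let ?A = "{1..n-1}" and ?N = "{1..n}" and ?p = "pd {1..n-1} (\<lambda>i. x i / x n)"
  have nA: "n \<notin> ?A" by auto
  have img: "{S\<in>Pow ?N. n \<in> S} = insert n ` Pow ?A"
  proof
    show "insert n ` Pow ?A \<subseteq> {S\<in>Pow ?N. n \<in> S}" using assms by force
    show "{S\<in>Pow ?N. n \<in> S} \<subseteq> insert n ` Pow ?A"
    proof
      fix S assume S: "S \<in> {S\<in>Pow ?N. n \<in> S}"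
      then have "S = insert n (S - {n})" by auto
      moreover have "S - {n} \<in> Pow ?A" using S by auto
      ultimately show "S \<in> insert n ` Pow ?A" by blast
    qed
  qed
  have inj: "inj_on (insert n) (Pow ?A)"
    by (rule inj_onI) (metis PowD insert_Diff_single insert_absorb insert_subset nA subset_iff Diff_insert_absorb)
  have a: "(\<Sum>S\<in>Pow ?N. (if n \<in> S then x n * x n * ?p (S - {n}) else 0) * g S)
      = x n * x n * (\<Sum>T\<in>Pow ?A. ?p T * g (insert n T))"
  proof -
    have "(\<Sum>S\<in>Pow ?N. (if n \<in> S then x n * x n * ?p (S - {n}) else 0) * g S)
        = (\<Sum>S\<in>Pow ?N. if n \<in> S then x n * x n * ?p (S - {n}) * g S else 0)"
      by (intro sum.cong) auto
    also have "\<dots> = (\<Sum>S\<in>{S\<in>Pow ?N. n \<in> S}. x n * x n * ?p (S - {n}) * g S)"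
      by (rule sum.inter_filter[symmetric]) simp
    also have "\<dots> = (\<Sum>T\<in>Pow ?A. x n * x n * ?p (insert n T - {n}) * g (insert n T))"
      by (simp only: img sum.reindex[OF inj] o_def)
    also have "\<dots> = (\<Sum>T\<in>Pow ?A. x n * x n * (?p T * g (insert n T)))"
    proof (intro sum.cong refl)
      fix T assume "T \<in> Pow ?A"
      then have "insert n T - {n} = T" using nA by auto
      then show "x n * x n * ?p (insert n T - {n}) * g (insert n T) = x n * x n * (?p T * g (insert n T))"
        by simp
    qed
    finally show ?thesis by (simp add: sum_distrib_left)
  qed
  have b: "(\<Sum>S\<in>Pow ?N. (if S = {n} then x n * (1 - x n) else 0) * g S) = x n * (1 - x n) * g {n}"
  proof -
    have "(\<Sum>S\<in>Pow ?N. (if S = {n} then x n * (1 - x n) else 0) * g S)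
        = (\<Sum>S\<in>Pow ?N. if S = {n} then x n * (1 - x n) * g {n} else 0)"
      by (intro sum.cong) auto
    also have "\<dots> = x n * (1 - x n) * g {n}" using assms by (subst sum.delta) auto
    finally show ?thesis .
  qed
  have c: "(\<Sum>S\<in>Pow ?N. (\<Sum>i\<in>?A. if S = {i} then (1 - x n) * x i else 0) * g S)
      = (1 - x n) * (\<Sum>i\<in>?A. x i * g {i})"
  proof -
    have "(\<Sum>S\<in>Pow ?N. (\<Sum>i\<in>?A. if S = {i} then (1 - x n) * x i else 0) * g S)
        = (\<Sum>S\<in>Pow ?N. (\<Sum>i\<in>?A. if S = {i} then (1 - x n) * x i * g {i} else 0))"
      by (intro sum.cong refl) (auto simp: sum_distrib_right intro!: sum.cong)
    also have "\<dots> = (\<Sum>i\<in>?A. (\<Sum>S\<in>Pow ?N. if S = {i} then (1 - x n) * x i * g {i} else 0))"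
      by (rule sum.swap)
    also have "\<dots> = (\<Sum>i\<in>?A. (1 - x n) * x i * g {i})"
      by (intro sum.cong refl) (subst sum.delta, auto)
    finally show ?thesis by (simp add: sum_distrib_left mult.assoc)
  qed
  have d: "(\<Sum>S\<in>Pow ?N. (if S = {} then (1 - x n) * (1 - (\<Sum>i\<in>?A. x i)) else 0) * g S)
      = (1 - x n) * (1 - (\<Sum>i\<in>?A. x i)) * g {}"
  proof -
    have "(\<Sum>S\<in>Pow ?N. (if S = {} then (1 - x n) * (1 - (\<Sum>i\<in>?A. x i)) else 0) * g S)
        = (\<Sum>S\<in>Pow ?N. if S = {} then (1 - x n) * (1 - (\<Sum>i\<in>?A. x i)) * g {} else 0)"
      by (intro sum.cong) auto
    also have "\<dots> = (1 - x n) * (1 - (\<Sum>i\<in>?A. x i)) * g {}" by (subst sum.delta) auto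
    finally show ?thesis .
  qed
  show ?thesis
    unfolding th_def distrib_right sum.distrib a b c d by simp
qed

lemma sum_filter_ind:
  fixes h :: "'a \<Rightarrow> real"
  assumes "finite B"
  shows "sum h {S\<in>B. P S} = (\<Sum>S\<in>B. h S * (if P S then 1 else 0))"
proof -
  have "sum h {S\<in>B. P S} = (\<Sum>S\<in>B. if P S then h S else 0)"
    by (rule sum.inter_filter[OF assms])
  also have "\<dots> = (\<Sum>S\<in>B. h S * (if P S then 1 else 0))" by (intro sum.cong) auto
  finally show ?thesis .
qed

lemma upper_bound:
  fixes f :: "nat set \<Rightarrow> real" and \<theta> :: "nat set \<Rightarrow> real"
  assumes sm: "submodular_setfun n f" and cc: "cc_feasible n x \<theta>"
  shows "(\<Sum>S\<in>Pow {1..n}. \<theta> S * f S) \<le> f {} + (\<Sum>i\<in>{1..n}. x i * (f {i} - f {}))"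
proof -
  let ?N = "{1..n}"
  have nn: "\<forall>S\<in>Pow ?N. \<theta> S \<ge> 0" and s1: "sum \<theta> (Pow ?N) = 1"
    and mg: "\<forall>i\<in>?N. sum \<theta> {S\<in>Pow ?N. i \<in> S} = x i"
    using cc unfolding cc_feasible_def by auto
  have "(\<Sum>S\<in>Pow ?N. \<theta> S * f S) \<le> (\<Sum>S\<in>Pow ?N. \<theta> S * (f {} + (\<Sum>i\<in>S. f {i} - f {})))"
    using nn sub_bound[OF sm] by (intro sum_mono mult_left_mono) auto
  also have "\<dots> = (\<Sum>S\<in>Pow ?N. \<theta> S * f {} + (\<Sum>i\<in>?N. (if i \<in> S then \<theta> S else 0) * (f {i} - f {})))"
  proof (intro sum.cong refl)
    fix S assume S: "S \<in> Pow ?N"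
    have "(\<Sum>i\<in>S. f {i} - f {}) = (\<Sum>i\<in>{i\<in>?N. i \<in> S}. f {i} - f {})"
      using S by (intro sum.cong) auto
    also have "\<dots> = (\<Sum>i\<in>?N. if i \<in> S then f {i} - f {} else 0)"
      by (rule sum.inter_filter) simp
    finally have "\<theta> S * (\<Sum>i\<in>S. f {i} - f {}) = (\<Sum>i\<in>?N. (if i \<in> S then \<theta> S else 0) * (f {i} - f {}))"
      by (simp add: sum_distrib_left) (intro sum.cong, auto)
    then show "\<theta> S * (f {} + (\<Sum>i\<in>S. f {i} - f {})) = \<theta> S * f {} + (\<Sum>i\<in>?N. (if i \<in> S then \<theta> S else 0) * (f {i} - f {}))"
      by (simp add: distrib_left)
  qed
  also have "\<dots> = f {} * sum \<theta> (Pow ?N) + (\<Sum>i\<in>?N. (\<Sum>S\<in>Pow ?N. if i \<in> S then \<theta> S else 0) * (f {i} - f {}))"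
    by (simp add: sum.distrib sum_distrib_left sum_distrib_right mult.commute) (rule sum.swap)
  also have "\<dots> = f {} + (\<Sum>i\<in>?N. x i * (f {i} - f {}))"
  proof -
    have "\<forall>i\<in>?N. (\<Sum>S\<in>Pow ?N. if i \<in> S then \<theta> S else 0) = x i"
    proof
      fix i assume i: "i \<in> ?N"
      have "(\<Sum>S\<in>Pow ?N. if i \<in> S then \<theta> S else 0) = sum \<theta> {S\<in>Pow ?N. i \<in> S}"
        by (rule sum.inter_filter[symmetric]) simp
      then show "(\<Sum>S\<in>Pow ?N. if i \<in> S then \<theta> S else 0) = x i" using mg i by simp
    qed
    then show ?thesis using s1 by simp
  qed
  finally show ?thesis .
qed

theorem mainTheorem12:
  fixes n :: nat and x :: "nat \<Rightarrow> real" and f :: "nat set \<Rightarrow> real"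
  assumes "n \<ge> 2"
    and "\<forall>i\<in>{1..n}. 0 \<le> x i \<and> x i \<le> 1"
    and "\<forall>i j. 1 \<le> i \<and> i \<le> j \<and> j \<le> n \<longrightarrow> x i \<le> x j"
    and "(\<Sum>i=1..n. x i) \<le> 1"
    and "\<forall>S\<subseteq>{1..n}. f S \<ge> 0"
    and "monotone_setfun n f"
    and "submodular_setfun n f"
    and "f {n} = Max ((\<lambda>i. f {i}) ` {1..n}) \<or> (\<exists>c. \<forall>i\<in>{1..n}. f {i} = c)"
  shows "concave_closure n f x \<le> 4/3 * upper_pi_ext n f x"
proof -
  note n2 = assms(1) and hx = assms(2) and hmono = assms(3) and hsum = assms(4)
    and fnn = assms(5) and mon = assms(6) and sm = assms(7) and hmax = assms(8)
  define N where "N = {1..n}"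
  define A where "A = {1..n-1}"
  define X where "X = x n"
  define y where "y = (\<lambda>i. x i / X)"
  define s' where "s' = (\<Sum>i\<in>A. x i)"
  define \<theta> where "\<theta> = th n x"
  have n1: "n \<ge> 1" using n2 by simp
  have nA: "n \<notin> A" unfolding A_def by auto
  have NA: "N = insert n A" unfolding N_def A_def using n1 by auto
  have AN: "A \<subseteq> N" unfolding N_def A_def by auto
  have finA: "finite A" unfolding A_def by simp
  have X01: "0 \<le> X" "X \<le> 1" using hx n1 unfolding X_def by auto
  have xA: "\<forall>i\<in>A. 0 \<le> x i \<and> x i \<le> X" using hx hmono unfolding A_def X_def by auto
  have hy: "\<forall>i\<in>A. 0 \<le> y i \<and> y i \<le> 1"
  proof
    fix i assume i: "i \<in> A"
    show "0 \<le> y i \<and> y i \<le> 1"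
    proof (cases "X = 0")
      case True then show ?thesis unfolding y_def by simp
    next
      case False then show ?thesis using xA i X01 unfolding y_def by (auto simp: divide_le_eq_1)
    qed
  qed
  have hxy: "\<forall>i\<in>A. X * y i = x i"
  proof
    fix i assume i: "i \<in> A"
    show "X * y i = x i"
    proof (cases "X = 0")
      case True then show ?thesis using xA i unfolding y_def by force
    next
      case False then show ?thesis unfolding y_def by simp
    qed
  qed
  have sN: "(\<Sum>i\<in>N. x i) = s' + X"
    unfolding NA s'_def X_def using finA nA by simp
  have hs': "s' \<le> 1 - X" using sN hsum unfolding N_def by simp
  have s'nn: "0 \<le> s'" unfolding s'_def using xA by (intro sum_nonneg) auto
  have pd1: "(\<Sum>T\<in>Pow A. pd A y T) = 1"
    using pd_marg[OF finA, of "{}" y] by simp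
  have pdi: "(\<Sum>T\<in>Pow A. if i \<in> T then pd A y T else 0) = y i" if "i \<in> A" for i
    using pd_marg[OF finA, of "{i}" y] that by simp
  have pdij: "(\<Sum>T\<in>Pow A. if i \<in> T \<and> j \<in> T then pd A y T else 0) = y i * y j"
    if "i \<in> A" "j \<in> A" "i \<noteq> j" for i j
    using pd_marg[OF finA, of "{i,j}" y] that by simp
  have pdnn: "\<forall>T\<in>Pow A. 0 \<le> pd A y T" using pd_nonneg[OF hy] by auto
  have TS: "(\<Sum>S\<in>Pow N. \<theta> S * g S) =
     X * X * (\<Sum>T\<in>Pow A. pd A y T * g (insert n T))
   + X * (1 - X) * g {n} + (1 - X) * (\<Sum>i\<in>A. x i * g {i})
   + (1 - X) * (1 - s') * g {}" for g
    using th_sum[OF n1, of x g] unfolding \<theta>_def N_def A_def X_def y_def s'_def by simp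
  have filt: "sum \<theta> {S\<in>Pow N. P S} = (\<Sum>S\<in>Pow N. \<theta> S * (if P S then 1 else 0))" for P
    by (rule sum_filter_ind) (simp add: N_def)
  have pi: "pi_feasible n x \<theta>"
  proof -
    have nn: "\<forall>S\<in>Pow N. \<theta> S \<ge> 0"
    proof
      fix S assume S: "S \<in> Pow N"
      have t1: "0 \<le> (if n \<in> S then X * X * pd A y (S - {n}) else 0)"
      proof -
        have "S - {n} \<in> Pow A" using S NA by auto
        then have "0 \<le> pd A y (S - {n})" using pdnn by blast
        then show ?thesis by simp
      qed
      have t2: "0 \<le> (if S = {n} then X * (1 - X) else 0)" using X01 by auto
      have t3: "0 \<le> (\<Sum>i\<in>A. if S = {i} then (1 - X) * x i else 0)"
        using X01 xA by (intro sum_nonneg) auto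
      have t4: "0 \<le> (if S = {} then (1 - X) * (1 - s') else 0)" using X01 hs' by auto
      have "\<theta> S = (if n \<in> S then X * X * pd A y (S - {n}) else 0)
        + (if S = {n} then X * (1 - X) else 0) + (\<Sum>i\<in>A. if S = {i} then (1 - X) * x i else 0)
        + (if S = {} then (1 - X) * (1 - s') else 0)"
        unfolding \<theta>_def th_def A_def X_def y_def s'_def by simp
      then show "\<theta> S \<ge> 0" using t1 t2 t3 t4 by linarith
    qed
    have tot: "sum \<theta> (Pow N) = 1"
      using TS[of "\<lambda>_. 1"] pd1 unfolding s'_def[symmetric] by (simp add: algebra_simps s'_def)
    have marg: "sum \<theta> {S\<in>Pow N. i \<in> S} = x i" if i: "i \<in> N" for i
    proof (cases "i = n")
      case True
      have z: "(\<Sum>k\<in>A. x k * (if n \<in> {k} then 1 else 0)) = 0"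
        using nA by (intro sum.neutral) auto
      have "sum \<theta> {S\<in>Pow N. i \<in> S} = X * X * (\<Sum>T\<in>Pow A. pd A y T) + X * (1 - X)"
        unfolding filt TS True z by simp
      then show ?thesis using pd1 True unfolding X_def by (simp add: algebra_simps)
    next
      case False
      then have iA: "i \<in> A" using i NA by auto
      have e1: "(\<Sum>T\<in>Pow A. pd A y T * (if i \<in> insert n T then 1 else 0)) = y i"
        using pdi[OF iA] False by (simp add: if_distrib cong: if_cong)
      have e2: "(\<Sum>k\<in>A. x k * (if i \<in> {k} then 1 else 0)) = x i"
      proof -
        have "(\<Sum>k\<in>A. x k * (if i \<in> {k} then 1 else 0)) = (\<Sum>k\<in>A. if i = k then x k else 0)"
          by (intro sum.cong) auto
        also have "\<dots> = x i" using iA finA by (simp add: sum.delta)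
        finally show ?thesis .
      qed
      have "sum \<theta> {S\<in>Pow N. i \<in> S} = X * X * y i + (1 - X) * x i"
        unfolding filt TS e1 e2 using False by simp
      then show ?thesis using hxy iA by (simp add: algebra_simps)
    qed
    have pair: "sum \<theta> {S\<in>Pow N. i \<in> S \<and> j \<in> S} = x i * x j"
      if i: "i \<in> N" and j: "j \<in> N" and ij: "i < j" for i j
    proof -
      have iA: "i \<in> A" using i j ij unfolding N_def A_def by auto
      have e2: "(\<Sum>k\<in>A. x k * (if i \<in> {k} \<and> j \<in> {k} then 1 else 0)) = 0"
        using ij by (intro sum.neutral) auto
      have e3: "(if i \<in> {n} \<and> j \<in> {n} then 1 else 0) = (0::real)" using ij by auto
      show ?thesis
      proof (cases "j = n")
        case True
        have e1: "(\<Sum>T\<in>Pow A. pd A y T * (if i \<in> insert n T \<and> j \<in> insert n T then 1 else 0)) = y i"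
          using pdi[OF iA] True ij by (simp add: if_distrib cong: if_cong)
        have "sum \<theta> {S\<in>Pow N. i \<in> S \<and> j \<in> S} = X * X * y i"
          unfolding filt TS e1 e2 e3 by simp
        then show ?thesis using hxy iA True unfolding X_def by (simp add: algebra_simps)
      next
        case False
        then have jA: "j \<in> A" using j NA by auto
        have e1: "(\<Sum>T\<in>Pow A. pd A y T * (if i \<in> insert n T \<and> j \<in> insert n T then 1 else 0)) = y i * y j"
        proof -
          have "(\<Sum>T\<in>Pow A. pd A y T * (if i \<in> insert n T \<and> j \<in> insert n T then 1 else 0))
             = (\<Sum>T\<in>Pow A. if i \<in> T \<and> j \<in> T then pd A y T else 0)"
            using iA jA nA by (intro sum.cong) auto
          then show ?thesis using pdij[OF iA jA] ij by simp
        qed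
        have "sum \<theta> {S\<in>Pow N. i \<in> S \<and> j \<in> S} = X * X * (y i * y j)"
          unfolding filt TS e1 e2 e3 by simp
        also have "\<dots> = (X * y i) * (X * y j)" by simp
        finally show ?thesis using hxy iA jA by simp
      qed
    qed
    show ?thesis unfolding pi_feasible_def cc_feasible_def
      using nn tot marg pair unfolding N_def by auto
  qed
  define U where "U = f {} + (\<Sum>i\<in>N. x i * (f {i} - f {}))"
  have ub: "(\<Sum>S\<in>Pow N. \<theta>' S * f S) \<le> U" if "cc_feasible n x \<theta>'" for \<theta>'
    using upper_bound[OF sm that] unfolding U_def N_def by simp
  have fi0: "f {} \<le> f {i}" if "i \<in> N" for i
    using mon that unfolding monotone_setfun_def N_def by auto
  have fin: "f {i} \<le> f {n}" if "i \<in> N" for i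
    using hmax
  proof
    assume "f {n} = Max ((\<lambda>i. f {i}) ` {1..n})"
    then show ?thesis using that unfolding N_def by simp
  next
    assume "\<exists>c. \<forall>i\<in>{1..n}. f {i} = c"
    then show ?thesis using that n1 unfolding N_def by auto
  qed
  have fins: "f {n} \<le> f (insert n T)" if "T \<in> Pow A" for T
  proof -
    have "insert n T \<subseteq> {1..n}" using that n1 AN unfolding N_def by auto
    then show ?thesis using mon[unfolded monotone_setfun_def, rule_format, of "{n}" "insert n T"] by simp
  qed
  define V where "V = (\<Sum>S\<in>Pow N. \<theta> S * f S)"
  have Vlow: "V \<ge> X * X * f {n} + X * (1 - X) * f {n} + (1 - X) * (\<Sum>i\<in>A. x i * f {i}) + (1 - X) * (1 - s') * f {}"
  proof -
    have "(\<Sum>T\<in>Pow A. pd A y T * f (insert n T)) \<ge> (\<Sum>T\<in>Pow A. pd A y T * f {n})"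
      using pdnn fins by (intro sum_mono mult_left_mono) auto
    also have "(\<Sum>T\<in>Pow A. pd A y T * f {n}) = f {n}" using pd1 by (simp add: sum_distrib_right[symmetric])
    finally have "(\<Sum>T\<in>Pow A. pd A y T * f (insert n T)) \<ge> f {n}" .
    then have "X * X * (\<Sum>T\<in>Pow A. pd A y T * f (insert n T)) \<ge> X * X * f {n}"
      using X01 by (intro mult_left_mono) auto
    then show ?thesis unfolding V_def TS by linarith
  qed
  define B where "B = (\<Sum>i\<in>A. x i * (f {i} - f {}))"
  define G where "G = f {n} - f {}"
  have B0: "0 \<le> B" unfolding B_def using xA fi0 AN by (intro sum_nonneg mult_nonneg_nonneg) auto
  have B1: "B \<le> s' * G"
  proof -
    have "B \<le> (\<Sum>i\<in>A. x i * G)" unfolding B_def G_def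
      using xA fin AN by (intro sum_mono mult_left_mono) auto
    then show ?thesis unfolding s'_def by (simp add: sum_distrib_right)
  qed
  have G0: "0 \<le> G" unfolding G_def using fi0 n1 unfolding N_def by auto
  have F0: "0 \<le> f {}" using fnn by auto
  have UB: "U = f {} + B + X * G"
  proof -
    have "U = f {} + (x n * (f {n} - f {}) + B)"
      unfolding U_def B_def NA using finA nA by (simp add: sum.insert)
    then show ?thesis unfolding X_def G_def by simp
  qed
  have sA: "(\<Sum>i\<in>A. x i * f {i}) = B + s' * f {}"
  proof -
    have "B = (\<Sum>i\<in>A. x i * f {i} - x i * f {})" unfolding B_def
      by (simp add: right_diff_distrib)
    also have "\<dots> = (\<Sum>i\<in>A. x i * f {i}) - s' * f {}"
      unfolding s'_def by (simp only: sum_subtractf sum_distrib_right)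
    finally show ?thesis by simp
  qed
  have eqV: "X * X * f {n} + X * (1 - X) * f {n} + (1 - X) * (B + s' * f {}) + (1 - X) * (1 - s') * f {}
      = f {} + X * G + (1 - X) * B"
    unfolding G_def by (simp add: algebra_simps)
  have VB: "V \<ge> f {} + X * G + (1 - X) * B"
    using Vlow eqV unfolding sA by linarith
  have B2: "B \<le> (1 - X) * G"
  proof -
    have "s' * G \<le> (1 - X) * G" using hs' G0 by (rule mult_right_mono)
    then show ?thesis using B1 by linarith
  qed
  have key: "3 * U \<le> 4 * V"
  proof -
    have h: "X * G + (1 - 4 * X) * B \<ge> 0"
    proof (cases "1 - 4 * X \<ge> 0")
      case True then show ?thesis using X01 G0 B0 by simp
    next
      case False
      then have "(1 - 4 * X) * B \<ge> (1 - 4 * X) * ((1 - X) * G)"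
        using B2 by (intro mult_left_mono_neg) auto
      moreover have "X * G + (1 - 4 * X) * ((1 - X) * G) = (2 * X - 1)^2 * G"
        by (simp add: algebra_simps power2_eq_square)
      moreover have "(2 * X - 1)^2 * G \<ge> 0" using G0 by simp
      ultimately show ?thesis by linarith
    qed
    have e: "(1 - 4 * X) * B = B - 4 * (X * B)" "(1 - X) * B = B - X * B"
      by (simp_all add: algebra_simps)
    show ?thesis using h UB VB F0 unfolding e by linarith
  qed
  have cc\<theta>: "cc_feasible n x \<theta>" using pi unfolding pi_feasible_def by simp
  have "concave_closure n f x \<le> U"
    unfolding concave_closure_def
  proof (rule cSup_least)
    show "{\<Sum>S\<in>Pow {1..n}. \<theta>' S * f S |\<theta>'. cc_feasible n x \<theta>'} \<noteq> {}" using cc\<theta> by blast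
  next
    fix v assume "v \<in> {\<Sum>S\<in>Pow {1..n}. \<theta>' S * f S |\<theta>'. cc_feasible n x \<theta>'}"
    then show "v \<le> U" using ub unfolding N_def by blast
  qed
  moreover have "V \<le> upper_pi_ext n f x"
    unfolding upper_pi_ext_def
  proof (rule cSup_upper)
    show "V \<in> {\<Sum>S\<in>Pow {1..n}. \<theta>' S * f S |\<theta>'. pi_feasible n x \<theta>'}"
      using pi unfolding V_def N_def by blast
    show "bdd_above {\<Sum>S\<in>Pow {1..n}. \<theta>' S * f S |\<theta>'. pi_feasible n x \<theta>'}"
      using ub unfolding bdd_above_def N_def pi_feasible_def by blast
  qed
  ultimately show ?thesis using key by linarith
qed

end
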